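(* Let $L\subseteq\Sigma^*$ be a regular language with syntactic ordered monoid $(M,\le)$, let $G\subseteq M$ be a generating set and $eval:G^*\to M$ the natural evaluation morphism. If one of the following holds, then $L\notin Pol(\mathcal{C}om)(\Sigma)$: (1) there exist $u,v,w_1,w_2\in G^*$ with $u=w_1w_2$, $v$ a shuffle of $w_1$ and $w_2$, $eval(u)$ idempotent and $eval(uvu)\not\le eval(u)$; (2) $M$ is divided by a non-commutative group; (3) $M$ is a $T_q$ monoid for some $q>1$. In particular, if $M$ is a $T_q$ monoid for some $q>1$ or is divided by one of $BA_2^+$, $U^+$ or a non-commutative group, then $L\notin Pol(\mathcal{C}om)(\Sigma)$.
   Context: Syntactic ordered monoid of $L\subseteq\Sigma^*$: write $x\preceq_L y$ if for all $u,v\in\Sigma^*$, $uyv\in L\Rightarrow uxv\in L$; the syntactic monoid $\Sigma^*/\equiv_L$ (with $x\equiv_L y$ iff $x\preceq_L y$ and $y\preceq_L x$) is ordered by $[x]\le[y]$ iff $x\preceq_L y$. $\mathcal{C}om(\Sigma)$ is the set of regular languages over $\Sigma$ whose syntactic monoid is commutative; $Pol(\mathcal{C}om)(\Sigma)$ is the set of finite unions of languages $L_0a_1L_1\cdots a_kL_k$ with $k\ge0$, $a_i\in\Sigma$, $L_i\in\mathcal{C}om(\Sigma)$. $v$ is a shuffle of $w_1,w_2$ if there are $k\ge0$ and words $w_{1,1},\dots,w_{1,k},w_{2,1},\dots,w_{2,k}$ (possibly empty) with $w_1=w_{1,1}\cdots w_{1,k}$, $w_2=w_{2,1}\cdots w_{2,k}$,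 $v=w_{1,1}w_{2,1}\cdots w_{1,k}w_{2,k}$. $M$ is a $T_q$ monoid if there exist idempotents $e,f\in M$ with $(ef)^qe=e$ and $(ef)^re\ne e$ for every positive integer $r$ not divisible by $q$. An ordered monoid $N$ divides $M$ if there is a surjective order-preserving monoid morphism from a submonoid of $M$ (restricted order) onto $N$; groups carry the equality order. $BA_2^+$ is the syntactic ordered monoid of $(ab)^*\subseteq\{a,b\}^*$; $U^+$ is the syntactic ordered monoid of the complement in $\{a,b\}^*$ of $(a\cup b)^*aa(a\cup b)^*$. *)

theory Defs
  imports "HOL-Algebra.Group"
begin

definition regular :: "('a::finite) list set \<Rightarrow> bool" where
  "regular L \<longleftrightarrow> (\<exists>(Q::nat set) q0 (\<delta>::nat \<Rightarrow> 'a \<Rightarrow> nat) F.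
      finite Q \<and> q0 \<in> Q \<and> (\<forall>q\<in>Q. \<forall>a. \<delta> q a \<in> Q) \<and> F \<subseteq> Q \<and>
      L = {w. foldl \<delta> q0 w \<in> F})"

definition lang_conc :: "'a list set \<Rightarrow> 'a list set \<Rightarrow> 'a list set" where
  "lang_conc A B = {x @ y | x y. x \<in> A \<and> y \<in> B}"

definition synt_le :: "'a list set \<Rightarrow> 'a list \<Rightarrow> 'a list \<Rightarrow> bool" where
  "synt_le L x y \<longleftrightarrow> (\<forall>u v. u @ y @ v \<in> L \<longrightarrow> u @ x @ v \<in> L)"

definition synt_class :: "'a list set \<Rightarrow> 'a list \<Rightarrow> 'a list set" where
  "synt_class L x = {y. synt_le L x y \<and> synt_le L y x}"

definition synt_rep :: "'a list set \<Rightarrow> 'a list" where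
  "synt_rep X = (SOME x. x \<in> X)"

definition synt_monoid :: "'a list set \<Rightarrow> 'a list set monoid" where
  "synt_monoid L = \<lparr>carrier = range (synt_class L),
      mult = (\<lambda>X Y. synt_class L (synt_rep X @ synt_rep Y)),
      one = synt_class L []\<rparr>"

definition synt_order :: "'a list set \<Rightarrow> 'a list set \<Rightarrow> 'a list set \<Rightarrow> bool" where
  "synt_order L X Y \<longleftrightarrow> synt_le L (synt_rep X) (synt_rep Y)"

definition Com :: "('a::finite) list set set" where
  "Com = {L. regular L \<and>
     (\<forall>X\<in>carrier (synt_monoid L). \<forall>Y\<in>carrier (synt_monoid L).
        X \<otimes>\<^bsub>synt_monoid L\<^esub> Y = Y \<otimes>\<^bsub>synt_monoid L\<^esub> X)}"

text \<open>Marked product L0 a1 L1 ... ak Lk, given L0 and the list [(a1,L1),...,(ak,Lk)].\<close>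
fun mprod :: "'a list set \<Rightarrow> ('a \<times> 'a list set) list \<Rightarrow> 'a list set" where
  "mprod L0 [] = L0"
| "mprod L0 ((a, L1) # rest) = lang_conc L0 (lang_conc {[a]} (mprod L1 rest))"

definition PolCom :: "('a::finite) list set set" where
  "PolCom = {L. \<exists>F. finite F \<and>
     (\<forall>(L0, ps) \<in> F. L0 \<in> Com \<and> (\<forall>(a, Li) \<in> set ps. Li \<in> Com)) \<and>
     L = (\<Union>(L0, ps) \<in> F. mprod L0 ps)}"

definition eval :: "('m, 'b) monoid_scheme \<Rightarrow> 'm list \<Rightarrow> 'm" where
  "eval M ws = foldr (\<lambda>x y. x \<otimes>\<^bsub>M\<^esub> y) ws \<one>\<^bsub>M\<^esub>"

definition generating_set :: "('m, 'b) monoid_scheme \<Rightarrow> 'm set \<Rightarrow> bool" where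
  "generating_set M G \<longleftrightarrow> G \<subseteq> carrier M \<and> (\<forall>m\<in>carrier M. \<exists>w\<in>lists G. eval M w = m)"

definition Tq_monoid :: "('m, 'b) monoid_scheme \<Rightarrow> nat \<Rightarrow> bool" where
  "Tq_monoid M q \<longleftrightarrow> (\<exists>e\<in>carrier M. \<exists>f\<in>carrier M.
      e \<otimes>\<^bsub>M\<^esub> e = e \<and> f \<otimes>\<^bsub>M\<^esub> f = f \<and>
      (e \<otimes>\<^bsub>M\<^esub> f) [^]\<^bsub>M\<^esub> q \<otimes>\<^bsub>M\<^esub> e = e \<and>
      (\<forall>r::nat. 0 < r \<and> \<not> q dvd r \<longrightarrow> (e \<otimes>\<^bsub>M\<^esub> f) [^]\<^bsub>M\<^esub> r \<otimes>\<^bsub>M\<^esub> e \<noteq> e))"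

definition odivides :: "('n, 'c) monoid_scheme \<Rightarrow> ('n \<Rightarrow> 'n \<Rightarrow> bool) \<Rightarrow>
    ('m, 'd) monoid_scheme \<Rightarrow> ('m \<Rightarrow> 'm \<Rightarrow> bool) \<Rightarrow> bool" where
  "odivides N leN M leM \<longleftrightarrow> (\<exists>S h. S \<subseteq> carrier M \<and> \<one>\<^bsub>M\<^esub> \<in> S \<and>
      (\<forall>x\<in>S. \<forall>y\<in>S. x \<otimes>\<^bsub>M\<^esub> y \<in> S) \<and>
      h ` S = carrier N \<and>
      (\<forall>x\<in>S. \<forall>y\<in>S. h (x \<otimes>\<^bsub>M\<^esub> y) = h x \<otimes>\<^bsub>N\<^esub> h y) \<and>
      h \<one>\<^bsub>M\<^esub> = \<one>\<^bsub>N\<^esub> \<and>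
      (\<forall>x\<in>S. \<forall>y\<in>S. leM x y \<longrightarrow> leN (h x) (h y)))"

datatype ab = a | b

definition BA2_lang :: "ab list set" where
  "BA2_lang = {w. \<exists>n. w = concat (replicate n [a, b])}"

definition U_lang :: "ab list set" where
  "U_lang = {w. \<not> (\<exists>u v. w = u @ [a, a] @ v)}"

end

theory Submission
  imports Defs "HOL-Library.Multiset"
begin


definition eqv :: "'a list set \<Rightarrow> 'a list \<Rightarrow> 'a list \<Rightarrow> bool" where
  "eqv L x y \<longleftrightarrow> synt_le L x y \<and> synt_le L y x"

lemma sle_refl: "synt_le L x x" by (simp add: synt_le_def)
lemma sle_trans: "synt_le L x y \<Longrightarrow> synt_le L y z \<Longrightarrow> synt_le L x z"
  by (simp add: synt_le_def)
lemma sle_cong: "synt_le L x y \<Longrightarrow> synt_le L (p @ x @ q) (p @ y @ q)"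
  unfolding synt_le_def by (metis append.assoc)
lemma sle_cong2: "synt_le L x y \<Longrightarrow> synt_le L x' y' \<Longrightarrow> synt_le L (x @ x') (y @ y')"
proof -
  assume "synt_le L x y" "synt_le L x' y'"
  then have "synt_le L (x @ x' @ []) (y @ x' @ [])" "synt_le L ([] @ y @ x') ([] @ y @ y')"
    using sle_cong[of L x y "[]" "x' @ []"] sle_cong[of L x' y' "[] @ y" "[]"] by auto
  then show ?thesis using sle_trans by fastforce
qed
lemma eqv_refl: "eqv L x x" by (simp add: eqv_def sle_refl)
lemma eqv_sym: "eqv L x y \<Longrightarrow> eqv L y x" by (simp add: eqv_def)
lemma eqv_trans: "eqv L x y \<Longrightarrow> eqv L y z \<Longrightarrow> eqv L x z"
  unfolding eqv_def using sle_trans by blast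
lemma eqv_cong2: "eqv L x y \<Longrightarrow> eqv L x' y' \<Longrightarrow> eqv L (x @ x') (y @ y')"
  unfolding eqv_def using sle_cong2 by blast

lemma class_eq_iff: "synt_class L x = synt_class L y \<longleftrightarrow> eqv L x y"
  unfolding synt_class_def eqv_def set_eq_iff mem_Collect_eq
  by (metis sle_refl sle_trans)

lemma in_class: "x \<in> synt_class L x"
  by (simp add: synt_class_def sle_refl)

lemma rep_eqv: "eqv L (synt_rep (synt_class L x)) x"
proof -
  have "synt_rep (synt_class L x) \<in> synt_class L x"
    unfolding synt_rep_def by (rule someI, rule in_class)
  then show ?thesis by (simp add: synt_class_def eqv_def)
qed

lemma rep_class: "synt_class L (synt_rep (synt_class L x)) = synt_class L x"
  using rep_eqv class_eq_iff by blast

lemma carrier_synt: "carrier (synt_monoid L) = range (synt_class L)"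
  by (simp add: synt_monoid_def)

lemma mult_class: "synt_class L x \<otimes>\<^bsub>synt_monoid L\<^esub> synt_class L y = synt_class L (x @ y)"
  unfolding synt_monoid_def using rep_eqv eqv_cong2 class_eq_iff by simp blast

lemma one_class: "\<one>\<^bsub>synt_monoid L\<^esub> = synt_class L []"
  by (simp add: synt_monoid_def)

lemma order_class: "synt_order L (synt_class L x) (synt_class L y) \<longleftrightarrow> synt_le L x y"
  unfolding synt_order_def using rep_eqv[of L x] rep_eqv[of L y] unfolding eqv_def
  using sle_trans by blast

lemma carrier_rep: "X \<in> carrier (synt_monoid L) \<Longrightarrow> synt_class L (synt_rep X) = X"
  using rep_class carrier_synt by (metis imageE)

lemma eval_class: "ws \<in> lists (carrier (synt_monoid L)) \<Longrightarrow>
   eval (synt_monoid L) ws = synt_class L (concat (map synt_rep ws))"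
proof (induction ws)
  case Nil then show ?case by (simp add: eval_def one_class)
next
  case (Cons X ws)
  then have "eval (synt_monoid L) (X # ws) = X \<otimes>\<^bsub>synt_monoid L\<^esub> eval (synt_monoid L) ws"
    by (simp add: eval_def)
  also have "\<dots> = synt_class L (synt_rep X) \<otimes>\<^bsub>synt_monoid L\<^esub> synt_class L (concat (map synt_rep ws))"
    using Cons carrier_rep by (metis listsE)
  finally show ?case by (simp add: mult_class)
qed

lemma eval_words: "eval (synt_monoid L) (map (synt_class L) zs) = synt_class L (concat zs)"
  by (induction zs) (simp_all add: eval_def one_class mult_class)

lemma mset_concat_map: "mset v = mset u \<Longrightarrow> mset (concat (map f v)) = mset (concat (map f u))"
proof (induction v arbitrary: u)
  case Nil then show ?case by simp
next
  case (Cons c v)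
  then have "c \<in> set u" by (metis list.set_intros(1) set_mset_mset)
  then obtain u1 u2 where u: "u = u1 @ c # u2" by (meson split_list)
  with Cons.prems have "mset v = mset (u1 @ u2)" by simp
  from Cons.IH[OF this] show ?case using u by simp
qed

lemma mset_shuffles: "zs \<in> shuffles xs ys \<Longrightarrow> mset zs = mset xs + mset ys"
  by (induction xs ys arbitrary: zs rule: shuffles.induct) auto



definition pw :: "'a list \<Rightarrow> nat \<Rightarrow> 'a list" where "pw x n = concat (replicate n x)"

lemma pw_0[simp]: "pw x 0 = []" by (simp add: pw_def)
lemma pw_Suc: "pw x (Suc n) = x @ pw x n" by (simp add: pw_def)
lemma pw_Suc2: "pw x (Suc n) = pw x n @ x" by (simp add: pw_def replicate_append_same[symmetric])
lemma pw_add: "pw x (m + n) = pw x m @ pw x n" by (simp add: pw_def replicate_add)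

definition pc :: "'a list set \<Rightarrow> bool" where
  "pc K \<longleftrightarrow> (\<forall>p q al al'. mset al = mset al' \<longrightarrow> p @ al @ q \<in> K \<longrightarrow> p @ al' @ q \<in> K)"

lemma Com_swap:
  assumes "K \<in> Com" shows "eqv K ([c] @ be) (be @ [c])"
proof -
  have "synt_class K [c] \<otimes>\<^bsub>synt_monoid K\<^esub> synt_class K be
      = synt_class K be \<otimes>\<^bsub>synt_monoid K\<^esub> synt_class K [c]"
    using assms unfolding Com_def by (simp add: carrier_synt)
  then show ?thesis by (simp add: mult_class class_eq_iff)
qed

lemma Com_pc: assumes "K \<in> Com" shows "pc K"
proof -
  have "\<forall>p q al'. mset al = mset al' \<longrightarrow> p @ al @ q \<in> K \<longrightarrow> p @ al' @ q \<in> K" for al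
  proof (induction al)
    case Nil then show ?case by simp
  next
    case (Cons c al)
    show ?case
    proof (intro allI impI)
      fix p q al'
      assume m: "mset (c # al) = mset al'" and mem: "p @ (c # al) @ q \<in> K"
      then have "c \<in> set al'" by (metis list.set_intros(1) set_mset_mset)
      then obtain b1 b2 where al': "al' = b1 @ c # b2" by (meson split_list)
      with m have "mset al = mset (b1 @ b2)" by simp
      moreover have "(p @ [c]) @ al @ q \<in> K" using mem by simp
      ultimately have "(p @ [c]) @ (b1 @ b2) @ q \<in> K" using Cons.IH by blast
      then have "p @ ([c] @ b1) @ (b2 @ q) \<in> K" by simp
      moreover have "synt_le K (b1 @ [c]) ([c] @ b1)" using Com_swap[OF assms] eqv_def by blast
      ultimately have "p @ (b1 @ [c]) @ (b2 @ q) \<in> K" unfolding synt_le_def by blast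
      then show "p @ al' @ q \<in> K" using al' by simp
    qed
  qed
  then show ?thesis unfolding pc_def by blast
qed

lemma mprod_ConsI: "z0 \<in> L0 \<Longrightarrow> w' \<in> mprod L1 ps \<Longrightarrow> z0 @ c # w' \<in> mprod L0 ((c, L1) # ps)"
  unfolding mprod.simps lang_conc_def by fastforce

lemma keyG:
  assumes my: "mset y = mset x"
  shows "pc L0 \<and> (\<forall>(c, Li) \<in> set ps. pc Li) \<Longrightarrow> length ps < n \<Longrightarrow> s @ pw x n @ t \<in> mprod L0 ps \<Longrightarrow>
    \<exists>i j. i + 1 + j = n \<and> s @ pw x i @ y @ pw x j @ t \<in> mprod L0 ps"
proof (induction ps arbitrary: L0 s t n)
  case Nil
  then obtain n' where n: "n = Suc n'" by (cases n) auto
  have "s @ x @ (pw x n' @ t) \<in> L0" using Nil n by (simp add: pw_Suc)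
  then have "s @ y @ (pw x n' @ t) \<in> L0" using Nil my unfolding pc_def by metis
  then show ?case using n by (intro exI[of _ 0] exI[of _ n']) simp
next
  case (Cons pr ps)
  obtain c L1 where pr: "pr = (c, L1)" by fastforce
  obtain n' where n: "n = Suc n'" using Cons.prems by (cases n) auto
  from Cons.prems(3) obtain z0 w' where z0: "z0 \<in> L0" and w': "w' \<in> mprod L1 ps"
    and eq: "s @ pw x n @ t = z0 @ c # w'"
    by (auto simp: pr lang_conc_def)
  have eq2: "(s @ x) @ (pw x n' @ t) = z0 @ (c # w')" using eq n by (simp add: pw_Suc)
  show ?case
  proof (cases "length (s @ x) \<le> length z0")
    case True
    obtain us where us: "(s @ x = z0 @ us \<and> us @ (pw x n' @ t) = c # w') \<or>
        ((s @ x) @ us = z0 \<and> pw x n' @ t = us @ c # w')"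
      using eq2 unfolding append_eq_append_conv2 by blast
    then obtain r where r: "z0 = (s @ x) @ r" "pw x n' @ t = r @ c # w'"
    proof
      assume h: "s @ x = z0 @ us \<and> us @ (pw x n' @ t) = c # w'"
      then have "us = []" using True by (metis append_eq_append_conv le_antisym length_append le_add1 append_Nil2 self_append_conv)
      then show ?thesis using h that[of "[]"] by simp
    qed (use that in auto)
    have "s @ y @ r \<in> L0" using Cons.prems(1) z0 r my unfolding pc_def
      by (metis append.right_neutral append_assoc)
    then have "s @ pw x 0 @ y @ pw x n' @ t \<in> mprod L0 (pr # ps)"
    proof -
      have "s @ pw x 0 @ y @ pw x n' @ t = (s @ y @ r) @ ([c] @ w')" using r by simp
      then show ?thesis using w' \<open>s @ y @ r \<in> L0\<close> mprod_ConsI pr by fastforce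
    qed
    then show ?thesis using n by (intro exI[of _ 0] exI[of _ n']) auto
  next
    case False
    obtain us where us: "(s @ x = z0 @ us \<and> us @ (pw x n' @ t) = c # w') \<or>
        ((s @ x) @ us = z0 \<and> pw x n' @ t = us @ c # w')"
      using eq2 unfolding append_eq_append_conv2 by blast
    with False have h: "s @ x = z0 @ us \<and> us @ (pw x n' @ t) = c # w'"
      by (metis le_add1 length_append)
    then have "us \<noteq> []" using False by auto
    then obtain r where r: "s @ x = z0 @ c # r" "w' = r @ pw x n' @ t"
      using h by (cases us) auto
    have "pc L1 \<and> (\<forall>(c, Li) \<in> set ps. pc Li)" using Cons.prems(1) pr by auto
    moreover have "length ps < n'" using Cons.prems(2) n by simp
    ultimately obtain i j where ij: "i + 1 + j = n'" "r @ pw x i @ y @ pw x j @ t \<in> mprod L1 ps"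
      using Cons.IH w' r by blast
    have "z0 @ c # (r @ pw x i @ y @ pw x j @ t) \<in> mprod L0 (pr # ps)"
      using ij z0 mprod_ConsI pr by fastforce
    moreover have "z0 @ c # (r @ pw x i @ y @ pw x j @ t) = s @ pw x (Suc i) @ y @ pw x j @ t"
      using r by (simp add: pw_Suc)
    ultimately show ?thesis using ij n by (intro exI[of _ "Suc i"] exI[of _ j]) auto
  qed
qed



lemma pw_eqv: assumes "eqv L (x @ x) x" shows "eqv L (pw x (Suc m)) x"
proof (induction m)
  case 0 then show ?case by (simp add: pw_def eqv_refl)
next
  case (Suc m)
  have "eqv L (x @ pw x (Suc m)) (x @ x)" using Suc eqv_cong2 eqv_refl by blast
  then show ?case using assms eqv_trans by (metis pw_Suc)
qed

lemma keyA:
  assumes L: "L \<in> PolCom" and idem: "eqv L (x @ x) x" and my: "mset y = mset x"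
  shows "synt_le L (x @ y @ x) x"
proof -
  obtain F where F: "finite F" "\<forall>(L0, ps) \<in> F. L0 \<in> Com \<and> (\<forall>(a, Li) \<in> set ps. Li \<in> Com)"
    "L = (\<Union>(L0, ps) \<in> F. mprod L0 ps)"
    using L unfolding PolCom_def by blast
  define K where "K = Suc (\<Sum>(L0, ps)\<in>F. length ps)"
  show ?thesis unfolding synt_le_def
  proof (intro allI impI)
    fix u v assume uv: "u @ x @ v \<in> L"
    have "synt_le L (pw x (Suc (Suc K))) x" using pw_eqv[OF idem] eqv_def by blast
    then have "u @ pw x (Suc (Suc K)) @ v \<in> L" using uv synt_le_def by blast
    then obtain L0 ps where mem: "(L0, ps) \<in> F" "u @ pw x (Suc (Suc K)) @ v \<in> mprod L0 ps"
      using F(3) by blast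
    have pcs: "pc L0 \<and> (\<forall>(c, Li) \<in> set ps. pc Li)" using F(2) mem(1) Com_pc by fastforce
    have "length ps \<le> (\<Sum>(L0, ps)\<in>F. length ps)"
      using member_le_sum[OF mem(1), of "\<lambda>(L0, ps). length ps"] F(1) by simp
    then have lt: "length ps < K" unfolding K_def by simp
    have "pw x (Suc (Suc K)) = x @ pw x K @ x" by (metis pw_Suc pw_Suc2)
    then have "(u @ x) @ pw x K @ (x @ v) \<in> mprod L0 ps" using mem(2) by simp
    from keyG[OF my pcs lt this] obtain i j where
      "(u @ x) @ pw x i @ y @ pw x j @ (x @ v) \<in> mprod L0 ps" by blast
    moreover have eqw: "(u @ x) @ pw x i @ y @ pw x j @ (x @ v) = u @ pw x (Suc i) @ (y @ pw x (Suc j) @ v)"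
      by (simp add: pw_Suc) (metis pw_Suc pw_Suc2 append_assoc)
    ultimately have "u @ pw x (Suc i) @ (y @ pw x (Suc j) @ v) \<in> mprod L0 ps" by metis
    then have "u @ pw x (Suc i) @ (y @ pw x (Suc j) @ v) \<in> L"
      using F(3) mem(1) by blast
    then have "u @ x @ (y @ pw x (Suc j) @ v) \<in> L"
      using pw_eqv[OF idem] unfolding eqv_def synt_le_def by blast
    then have "(u @ x @ y) @ pw x (Suc j) @ v \<in> L" by simp
    then have "(u @ x @ y) @ x @ v \<in> L"
      using pw_eqv[OF idem] unfolding eqv_def synt_le_def by blast
    then show "u @ (x @ y @ x) @ v \<in> L" by simp
  qed
qed

lemma keyAM:
  assumes L: "L \<in> PolCom"
    and ws: "ws \<in> lists (carrier (synt_monoid L))" and vs: "vs \<in> lists (carrier (synt_monoid L))"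
    and m: "mset vs = mset ws"
    and idem: "eval (synt_monoid L) ws \<otimes>\<^bsub>synt_monoid L\<^esub> eval (synt_monoid L) ws = eval (synt_monoid L) ws"
  shows "synt_order L (eval (synt_monoid L) (ws @ vs @ ws)) (eval (synt_monoid L) ws)"
proof -
  define x where "x = concat (map synt_rep ws)"
  define y where "y = concat (map synt_rep vs)"
  have ex: "eval (synt_monoid L) ws = synt_class L x" using eval_class[OF ws] x_def by simp
  have exyx: "eval (synt_monoid L) (ws @ vs @ ws) = synt_class L (x @ y @ x)"
    using eval_class[of "ws @ vs @ ws" L] ws vs x_def y_def by simp
  have "eqv L (x @ x) x" using idem ex mult_class class_eq_iff by metis
  moreover have "mset y = mset x" using mset_concat_map[OF m] x_def y_def by simp
  ultimately have "synt_le L (x @ y @ x) x" using keyA[OF L] by blast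
  then show ?thesis using ex exyx order_class by metis
qed



lemma mset_pw: "mset (pw w n) = repeat_mset n (mset w)"
  by (induction n) (simp_all add: pw_Suc)

lemma pow_class: "(synt_class L x) [^]\<^bsub>synt_monoid L\<^esub> (n::nat) = synt_class L (pw x n)"
proof (induction n)
  case 0 then show ?case by (simp add: nat_pow_def one_class)
next
  case (Suc n)
  have "(synt_class L x) [^]\<^bsub>synt_monoid L\<^esub> (Suc n)
      = (synt_class L x) [^]\<^bsub>synt_monoid L\<^esub> n \<otimes>\<^bsub>synt_monoid L\<^esub> synt_class L x"
    by (simp add: nat_pow_def)
  then show ?case using Suc by (simp add: mult_class pw_Suc2)
qed

lemma Tq_case:
  assumes L: "L \<in> PolCom" and q: "q > 1" and T: "Tq_monoid (synt_monoid L) q"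
  shows False
proof -
  let ?M = "synt_monoid L"
  obtain e f where ef: "e \<in> carrier ?M" "f \<in> carrier ?M" "e \<otimes>\<^bsub>?M\<^esub> e = e" "f \<otimes>\<^bsub>?M\<^esub> f = f"
     "(e \<otimes>\<^bsub>?M\<^esub> f) [^]\<^bsub>?M\<^esub> q \<otimes>\<^bsub>?M\<^esub> e = e"
     "\<forall>r::nat. 0 < r \<and> \<not> q dvd r \<longrightarrow> (e \<otimes>\<^bsub>?M\<^esub> f) [^]\<^bsub>?M\<^esub> r \<otimes>\<^bsub>?M\<^esub> e \<noteq> e"
    using T unfolding Tq_monoid_def by blast
  obtain x z where xz: "e = synt_class L x" "f = synt_class L z" using ef(1,2) unfolding carrier_synt by blast
  have ex: "eqv L (x @ x) x" using ef(3) xz by (simp add: mult_class class_eq_iff)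
  have ez: "eqv L (z @ z) z" using ef(4) xz by (simp add: mult_class class_eq_iff)
  have eq: "eqv L (pw (x @ z) q @ x) x" using ef(5) xz by (simp add: mult_class class_eq_iff pow_class)
  obtain q0 where q0: "q = Suc q0" using q by (cases q) auto
  define X where "X = pw (x @ z) q @ x"
  define Y where "Y = pw x (Suc q) @ pw z q"
  have eqX: "eqv L X x" using eq X_def by simp
  have Xi: "eqv L (X @ X) X"
    using eqv_trans[OF eqv_trans[OF eqv_cong2[OF eqX eqX] ex] eqv_sym[OF eqX]] .
  have mY: "mset Y = mset X" unfolding X_def Y_def by (simp add: mset_pw)
  have le1: "synt_le L (X @ Y @ X) X" using keyA[OF L Xi mY] .
  have Yeq: "eqv L Y (x @ z)" unfolding Y_def q0 using eqv_cong2[OF pw_eqv[OF ex, of "Suc q0"] pw_eqv[OF ez, of q0]] .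
  have e1: "eqv L (X @ Y @ X) (x @ (x @ z) @ x)"
    using eqv_cong2[OF eqX eqv_cong2[OF Yeq eqX]] .
  have e2: "eqv L ((x @ x) @ (z @ x)) (x @ (z @ x))"
    using eqv_cong2[OF ex eqv_refl[of L "z @ x"]] .
  have e3: "eqv L (x @ (x @ z) @ x) (x @ z @ x)" using e2 by simp
  have "synt_le L (x @ z @ x) (X @ Y @ X)" using eqv_trans[OF e1 e3] unfolding eqv_def by blast
  then have "synt_le L (x @ z @ x) X" using le1 sle_trans by blast
  then have le2: "synt_le L (x @ z @ x) x" using eqX sle_trans unfolding eqv_def by blast
  have pwle: "synt_le L (pw (x @ z) r @ x) x" for r
  proof (induction r)
    case 0 then show ?case by (simp add: sle_refl)
  next
    case (Suc r)
    have "pw (x @ z) (Suc r) @ x = pw (x @ z) r @ (x @ z @ x) @ []" by (simp add: pw_Suc2)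
    moreover have "synt_le L (pw (x @ z) r @ (x @ z @ x) @ []) (pw (x @ z) r @ x @ [])"
      by (rule sle_cong[OF le2])
    ultimately show ?case using Suc sle_trans by fastforce
  qed
  have "pw (x @ z) q @ x = pw (x @ z) q0 @ (x @ z @ x) @ []" using q0 by (simp add: pw_Suc2)
  moreover have "synt_le L (pw (x @ z) q0 @ (x @ z @ x) @ []) (pw (x @ z) q0 @ x @ [])"
    by (rule sle_cong[OF le2])
  ultimately have "synt_le L x (pw (x @ z) q0 @ x)" using eq sle_trans unfolding eqv_def by fastforce
  then have "eqv L (pw (x @ z) q0 @ x) x" using pwle eqv_def by blast
  then have "(e \<otimes>\<^bsub>?M\<^esub> f) [^]\<^bsub>?M\<^esub> q0 \<otimes>\<^bsub>?M\<^esub> e = e"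
    using xz by (simp add: mult_class class_eq_iff pow_class)
  moreover have "0 < q0" "\<not> q dvd q0" using q q0 by (auto dest: dvd_imp_le)
  ultimately show False using ef(6) by blast
qed

lemma regular_finite:
  assumes "regular L" shows "finite (carrier (synt_monoid L))"
proof -
  obtain Q q0 \<delta> F where R: "finite (Q::nat set)" "q0 \<in> Q" "\<forall>q\<in>Q. \<forall>a. \<delta> q a \<in> Q" "F \<subseteq> Q"
      "L = {w. foldl \<delta> q0 w \<in> F}"
    using assms unfolding regular_def by blast
  have cl: "q \<in> Q \<Longrightarrow> foldl \<delta> q w \<in> Q" for q w
    by (induction w arbitrary: q) (use R(3) in auto)
  define T where "T w = restrict (\<lambda>q. foldl \<delta> q w) Q" for w
  have TQ: "T w \<in> Q \<rightarrow>\<^sub>E Q" for w unfolding T_def using cl by auto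
  have Teq: "T w = T w' \<Longrightarrow> synt_class L w = synt_class L w'" for w w'
  proof -
    assume h: "T w = T w'"
    have "u @ w @ v \<in> L \<longleftrightarrow> u @ w' @ v \<in> L" for u v
    proof -
      have "foldl \<delta> q0 u \<in> Q" using cl R(2) by blast
      then have "foldl \<delta> (foldl \<delta> q0 u) w = foldl \<delta> (foldl \<delta> q0 u) w'"
        using h unfolding T_def by (metis restrict_apply')
      then show ?thesis using R(5) by simp
    qed
    then have "eqv L w w'" unfolding eqv_def synt_le_def by blast
    then show ?thesis using class_eq_iff by blast
  qed
  have "range (synt_class L) \<subseteq> (\<lambda>g. synt_class L (SOME w. T w = g)) ` (Q \<rightarrow>\<^sub>E Q)"
  proof
    fix X assume "X \<in> range (synt_class L)"
    then obtain w where w: "X = synt_class L w" by blast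
    have "T (SOME w'. T w' = T w) = T w" by (rule someI) simp
    then have "X = synt_class L (SOME w'. T w' = T w)" using Teq w by metis
    then show "X \<in> (\<lambda>g. synt_class L (SOME w. T w = g)) ` (Q \<rightarrow>\<^sub>E Q)" using TQ by blast
  qed
  moreover have "finite (Q \<rightarrow>\<^sub>E Q)" using R(1) by (simp add: finite_PiE)
  ultimately show ?thesis by (metis carrier_synt finite_imageI finite_subset)
qed



lemma eval_append_M:
  "ws \<in> lists (carrier (synt_monoid L)) \<Longrightarrow> vs \<in> lists (carrier (synt_monoid L)) \<Longrightarrow>
   eval (synt_monoid L) (ws @ vs) = eval (synt_monoid L) ws \<otimes>\<^bsub>synt_monoid L\<^esub> eval (synt_monoid L) vs"
  by (simp add: eval_class mult_class)

lemma eval_carrier_M: "ws \<in> lists (carrier (synt_monoid L)) \<Longrightarrow> eval (synt_monoid L) ws \<in> carrier (synt_monoid L)"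
  by (simp add: eval_class carrier_synt)

lemma (in monoid) eval_closed_mon: "ys \<in> lists (carrier G) \<Longrightarrow> eval G ys \<in> carrier G"
  by (induction ys) (auto simp: eval_def)

lemma (in monoid) eval_append_mon:
  "xs \<in> lists (carrier G) \<Longrightarrow> ys \<in> lists (carrier G) \<Longrightarrow> eval G (xs @ ys) = eval G xs \<otimes> eval G ys
   \<and> eval G xs \<in> carrier G"
proof (induction xs)
  case Nil
  have "eval G ys \<in> carrier G" using Nil(2) by (induction ys) (auto simp: eval_def)
  then show ?case by (simp add: eval_def)
next
  case (Cons a xs)
  then show ?case using eval_closed_mon[of ys] by (simp add: eval_def m_assoc)
qed

lemma eval_hom:
  assumes S: "\<one>\<^bsub>M\<^esub> \<in> S" "\<forall>x\<in>S. \<forall>y\<in>S. x \<otimes>\<^bsub>M\<^esub> y \<in> S"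
    and h: "\<forall>x\<in>S. \<forall>y\<in>S. h (x \<otimes>\<^bsub>M\<^esub> y) = h x \<otimes>\<^bsub>N\<^esub> h y" "h \<one>\<^bsub>M\<^esub> = \<one>\<^bsub>N\<^esub>"
  shows "ws \<in> lists S \<Longrightarrow> eval M ws \<in> S \<and> h (eval M ws) = eval N (map h ws)"
  by (induction ws) (auto simp: eval_def S h)

lemma idem_pow:
  assumes fin: "finite (carrier (synt_monoid L))" and s: "s1 \<in> carrier (synt_monoid L)" "s2 \<in> carrier (synt_monoid L)"
  shows "\<exists>p'. eval (synt_monoid L) (concat (replicate (Suc p') [s1, s2])) \<otimes>\<^bsub>synt_monoid L\<^esub>
               eval (synt_monoid L) (concat (replicate (Suc p') [s1, s2]))
             = eval (synt_monoid L) (concat (replicate (Suc p') [s1, s2]))"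
proof -
  let ?M = "synt_monoid L"
  define E where "E n = eval ?M (concat (replicate n [s1, s2]))" for n
  have lst: "concat (replicate n [s1, s2]) \<in> lists (carrier ?M)" for n using s by (induction n) auto
  have Eadd: "E (m + n) = E m \<otimes>\<^bsub>?M\<^esub> E n" for m n
    unfolding E_def by (simp add: replicate_add eval_append_M[OF lst lst])
  have "range E \<subseteq> carrier ?M" unfolding E_def using eval_carrier_M[OF lst] by auto
  then have "finite (range E)" using fin finite_subset by blast
  then have "\<not> inj E" using finite_imageD by fastforce
  then obtain i j where ij: "i < j" "E i = E j" unfolding inj_def by (metis linorder_neqE_nat)
  define d where "d = j - i"
  have d: "d > 0" "E (i + d) = E i" using ij d_def by auto
  have step: "E (m + i + d) = E (m + i)" for m
    using Eadd[of m "i + d"] Eadd[of m i] d by (simp add: add.assoc)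
  have per: "E (m + i + k * d) = E (m + i)" for m k
  proof (induction k)
    case 0 then show ?case by simp
  next
    case (Suc k)
    have "E (m + i + Suc k * d) = E ((m + k * d) + i + d)" by (simp add: algebra_simps)
    also have "\<dots> = E ((m + k * d) + i)" by (rule step)
    also have "\<dots> = E (m + i)" using Suc by (simp add: algebra_simps)
    finally show ?case .
  qed
  define p where "p = Suc i * d"
  have pi: "p \<ge> Suc i" using d(1) p_def by (metis One_nat_def Suc_leI mult_le_mono2 nat_mult_1_right)
  have "E p \<otimes>\<^bsub>?M\<^esub> E p = E (p + p)" by (simp add: Eadd)
  also have "p + p = (p - i) + i + Suc i * d" using pi p_def by simp
  also have "E \<dots> = E ((p - i) + i)" by (rule per)
  also have "(p - i) + i = p" using pi by simp
  finally have "E p \<otimes>\<^bsub>?M\<^esub> E p = E p" .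
  moreover obtain p' where "p = Suc p'" using pi by (cases p) auto
  ultimately show ?thesis unfolding E_def by blast
qed



lemma div_core:
  fixes N :: "('n, 'c) monoid_scheme"
  assumes L: "L \<in> PolCom" and fin: "finite (carrier (synt_monoid L))"
    and S: "S \<subseteq> carrier (synt_monoid L)" "\<one>\<^bsub>synt_monoid L\<^esub> \<in> S"
      "\<forall>x\<in>S. \<forall>y\<in>S. x \<otimes>\<^bsub>synt_monoid L\<^esub> y \<in> S"
    and h: "\<forall>x\<in>S. \<forall>y\<in>S. h (x \<otimes>\<^bsub>synt_monoid L\<^esub> y) = h x \<otimes>\<^bsub>N\<^esub> h y"
      "h \<one>\<^bsub>synt_monoid L\<^esub> = \<one>\<^bsub>N\<^esub>"
    and ord: "\<forall>x\<in>S. \<forall>y\<in>S. synt_order L x y \<longrightarrow> leN (h x) (h y)"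
    and s: "s1 \<in> S" "s2 \<in> S"
  shows "\<exists>R p'. R = concat (replicate p' [s1, s2]) \<and> R \<in> lists S \<and>
     leN (eval N (map h (([s1, s2] @ R) @ ([s2, s1] @ R) @ ([s1, s2] @ R)))) (eval N (map h ([s1, s2] @ R))) \<and>
     eval N (map h ([s1, s2] @ R)) \<otimes>\<^bsub>N\<^esub> eval N (map h ([s1, s2] @ R)) = eval N (map h ([s1, s2] @ R))"
proof -
  let ?M = "synt_monoid L"
  obtain p' where idem: "eval ?M (concat (replicate (Suc p') [s1, s2])) \<otimes>\<^bsub>?M\<^esub>
               eval ?M (concat (replicate (Suc p') [s1, s2]))
             = eval ?M (concat (replicate (Suc p') [s1, s2]))"
    using idem_pow[OF fin] s S(1) by blast
  define R where "R = concat (replicate p' [s1, s2])"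
  define W where "W = [s1, s2] @ R"
  define V where "V = [s2, s1] @ R"
  have RS: "R \<in> lists S" unfolding R_def using s by (induction p') auto
  have WS: "W \<in> lists S" "V \<in> lists S" "W @ V @ W \<in> lists S" using RS s W_def V_def by auto
  have WM: "W \<in> lists (carrier ?M)" "V \<in> lists (carrier ?M)" using WS S(1) by auto
  have WM': "W \<in> lists (carrier ?M)" using WS S(1) by auto
  have idW: "eval ?M W \<otimes>\<^bsub>?M\<^esub> eval ?M W = eval ?M W" using idem by (simp add: W_def R_def)
  have mset: "mset V = mset W" by (simp add: V_def W_def)
  have o: "synt_order L (eval ?M (W @ V @ W)) (eval ?M W)" using keyAM[OF L WM' WM(2) mset idW] .
  note eh = eval_hom[OF S(2) S(3) h]
  have "leN (h (eval ?M (W @ V @ W))) (h (eval ?M W))" using ord o eh WS by blast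
  then have 1: "leN (eval N (map h (W @ V @ W))) (eval N (map h W))" using eh WS by metis
  have "h (eval ?M W \<otimes>\<^bsub>?M\<^esub> eval ?M W) = h (eval ?M W) \<otimes>\<^bsub>N\<^esub> h (eval ?M W)"
    using h(1) eh WS by blast
  then have 2: "eval N (map h W) \<otimes>\<^bsub>N\<^esub> eval N (map h W) = eval N (map h W)" using idW eh WS by metis
  show ?thesis using 1 2 RS R_def unfolding W_def V_def by blast
qed



lemma odividesE:
  assumes "odivides N leN M leM"
  obtains S h where "S \<subseteq> carrier M" "\<one>\<^bsub>M\<^esub> \<in> S" "\<forall>x\<in>S. \<forall>y\<in>S. x \<otimes>\<^bsub>M\<^esub> y \<in> S"
      "h ` S = carrier N" "\<forall>x\<in>S. \<forall>y\<in>S. h (x \<otimes>\<^bsub>M\<^esub> y) = h x \<otimes>\<^bsub>N\<^esub> h y"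
      "h \<one>\<^bsub>M\<^esub> = \<one>\<^bsub>N\<^esub>" "\<forall>x\<in>S. \<forall>y\<in>S. leM x y \<longrightarrow> leN (h x) (h y)"
  using assms unfolding odivides_def by blast

lemma lang_div_case:
  fixes L :: "('a::finite) list set" and K :: "ab list set"
  assumes L: "L \<in> PolCom" and reg: "regular L"
    and dv: "odivides (synt_monoid K) (synt_order K) (synt_monoid L) (synt_order L)"
  shows "\<exists>p'. synt_le K ((a # b # concat (replicate p' [a, b])) @ (b # a # concat (replicate p' [a, b]))
            @ (a # b # concat (replicate p' [a, b]))) (a # b # concat (replicate p' [a, b]))"
proof -
  let ?M = "synt_monoid L" and ?N = "synt_monoid K"
  obtain S h where S: "S \<subseteq> carrier ?M" "\<one>\<^bsub>?M\<^esub> \<in> S" "\<forall>x\<in>S. \<forall>y\<in>S. x \<otimes>\<^bsub>?M\<^esub> y \<in> S"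
      "h ` S = carrier ?N" "\<forall>x\<in>S. \<forall>y\<in>S. h (x \<otimes>\<^bsub>?M\<^esub> y) = h x \<otimes>\<^bsub>?N\<^esub> h y"
      "h \<one>\<^bsub>?M\<^esub> = \<one>\<^bsub>?N\<^esub>" "\<forall>x\<in>S. \<forall>y\<in>S. synt_order L x y \<longrightarrow> synt_order K (h x) (h y)"
    by (rule odividesE[OF dv])
  have "synt_class K [a] \<in> carrier ?N" "synt_class K [b] \<in> carrier ?N" by (auto simp: carrier_synt)
  then obtain s1 s2 where s: "s1 \<in> S" "s2 \<in> S" "h s1 = synt_class K [a]" "h s2 = synt_class K [b]"
    using S(4) by (metis imageE)
  obtain R p' where R: "R = concat (replicate p' [s1, s2])" "R \<in> lists S"
     "synt_order K (eval ?N (map h (([s1, s2] @ R) @ ([s2, s1] @ R) @ ([s1, s2] @ R)))) (eval ?N (map h ([s1, s2] @ R)))"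
    using div_core[OF L regular_finite[OF reg] S(1) S(2) S(3) S(5) S(6) S(7) s(1) s(2)] by (-, elim exE conjE) fast
  define wR where "wR = concat (replicate p' [a, b])"
  have hR: "map h R = map (\<lambda>c. synt_class K [c]) wR" unfolding R(1) wR_def using s
    by (induction p') auto
  have mm: "map h (([s1, s2] @ R) @ ([s2, s1] @ R) @ ([s1, s2] @ R))
      = map (synt_class K) (map (\<lambda>c. [c]) ((a # b # wR) @ (b # a # wR) @ (a # b # wR)))"
    using hR s by simp
  have mm2: "map h ([s1, s2] @ R) = map (synt_class K) (map (\<lambda>c. [c]) (a # b # wR))"
    using hR s by simp
  have "synt_order K (synt_class K ((a # b # wR) @ (b # a # wR) @ (a # b # wR))) (synt_class K (a # b # wR))"
    using R(3) unfolding mm mm2 eval_words by simp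
  then show ?thesis unfolding order_class wR_def by blast
qed

lemma BA2_not: "concat (replicate n [a, b]) \<noteq> concat (replicate m [a, b]) @ b # rest"
proof (induction m arbitrary: n)
  case 0 then show ?case by (cases n) auto
next
  case (Suc m) then show ?case by (cases n) auto
qed

lemma U_in: "concat (replicate n [a, b]) \<noteq> u @ [a, a] @ v"
proof (induction n arbitrary: u)
  case 0 then show ?case by simp
next
  case (Suc n)
  show ?case
  proof (cases u)
    case Nil then show ?thesis by simp
  next
    case (Cons c u')
    then show ?thesis
    proof (cases u')
      case Nil then show ?thesis using Cons by simp
    next
      case (Cons d u'') then show ?thesis using Suc.IH[of u''] \<open>u = c # u'\<close> by auto
    qed
  qed
qed

lemma BA2_case:
  assumes L: "L \<in> PolCom" and reg: "regular L"
    and dv: "odivides (synt_monoid BA2_lang) (synt_order BA2_lang) (synt_monoid L) (synt_order L)"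
  shows False
proof -
  obtain p' where le: "synt_le BA2_lang ((a # b # concat (replicate p' [a, b])) @ (b # a # concat (replicate p' [a, b]))
            @ (a # b # concat (replicate p' [a, b]))) (a # b # concat (replicate p' [a, b]))"
    using lang_div_case[OF L reg dv] by blast
  have "a # b # concat (replicate p' [a, b]) \<in> BA2_lang" unfolding BA2_lang_def
    by (rule CollectI, rule exI[of _ "Suc p'"]) simp
  then have "[] @ ((a # b # concat (replicate p' [a, b])) @ (b # a # concat (replicate p' [a, b]))
            @ (a # b # concat (replicate p' [a, b]))) @ [] \<in> BA2_lang"
    using le unfolding synt_le_def by (metis append_Nil append_Nil2)
  then obtain n where "concat (replicate n [a, b]) = concat (replicate (Suc p') [a, b]) @ b # (a # concat (replicate p' [a, b])
            @ (a # b # concat (replicate p' [a, b])))"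
    unfolding BA2_lang_def by auto
  then show False using BA2_not by blast
qed

lemma U_case:
  assumes L: "L \<in> PolCom" and reg: "regular L"
    and dv: "odivides (synt_monoid U_lang) (synt_order U_lang) (synt_monoid L) (synt_order L)"
  shows False
proof -
  obtain p' where le: "synt_le U_lang ((a # b # concat (replicate p' [a, b])) @ (b # a # concat (replicate p' [a, b]))
            @ (a # b # concat (replicate p' [a, b]))) (a # b # concat (replicate p' [a, b]))"
    using lang_div_case[OF L reg dv] by blast
  define wR where "wR = concat (replicate p' [a, b])"
  have "a # b # wR \<in> U_lang" unfolding U_lang_def wR_def using U_in[of "Suc p'"] by auto
  then have "[] @ ((a # b # wR) @ (b # a # wR) @ (a # b # wR)) @ [] \<in> U_lang"
    using le unfolding synt_le_def wR_def by (metis append_Nil append_Nil2)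
  moreover obtain rest where "wR @ a # b # wR = a # rest"
    unfolding wR_def by (cases p') auto
  ultimately have "(a # b # wR @ [b]) @ [a, a] @ rest \<in> U_lang" by simp
  then show False unfolding U_lang_def by blast
qed



lemma group_case:
  fixes L :: "('a::finite) list set" and Gr :: "'g monoid"
  assumes L: "L \<in> PolCom" and reg: "regular L"
    and grp: "group Gr" and nc: "\<not> comm_group Gr" and dv: "odivides Gr (=) (synt_monoid L) (synt_order L)"
  shows False
proof -
  let ?M = "synt_monoid L"
  obtain S h where S: "S \<subseteq> carrier ?M" "\<one>\<^bsub>?M\<^esub> \<in> S" "\<forall>x\<in>S. \<forall>y\<in>S. x \<otimes>\<^bsub>?M\<^esub> y \<in> S"
      "h ` S = carrier Gr" "\<forall>x\<in>S. \<forall>y\<in>S. h (x \<otimes>\<^bsub>?M\<^esub> y) = h x \<otimes>\<^bsub>Gr\<^esub> h y"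
      "h \<one>\<^bsub>?M\<^esub> = \<one>\<^bsub>Gr\<^esub>" "\<forall>x\<in>S. \<forall>y\<in>S. synt_order L x y \<longrightarrow> h x = h y"
    by (rule odividesE[OF dv])
  obtain g1 g2 where g: "g1 \<in> carrier Gr" "g2 \<in> carrier Gr" "g1 \<otimes>\<^bsub>Gr\<^esub> g2 \<noteq> g2 \<otimes>\<^bsub>Gr\<^esub> g1"
    using nc group.group_comm_groupI[OF grp] by blast
  obtain s1 s2 where s: "s1 \<in> S" "s2 \<in> S" "h s1 = g1" "h s2 = g2" using g S(4)
    by (metis imageE)
  obtain R p' where R: "R = concat (replicate p' [s1, s2])" "R \<in> lists S"
     "eval Gr (map h (([s1, s2] @ R) @ ([s2, s1] @ R) @ ([s1, s2] @ R))) = eval Gr (map h ([s1, s2] @ R))"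
     "eval Gr (map h ([s1, s2] @ R)) \<otimes>\<^bsub>Gr\<^esub> eval Gr (map h ([s1, s2] @ R)) = eval Gr (map h ([s1, s2] @ R))"
    using div_core[OF L regular_finite[OF reg] S(1) S(2) S(3) S(5) S(6) S(7) s(1) s(2)] by (-, elim exE conjE) fast
  interpret group Gr by (rule grp)
  have hR: "map h R \<in> lists (carrier Gr)" using R(2) S(4) by (auto simp flip: S(4))
  define C where "C = eval Gr (map h R)"
  have C: "C \<in> carrier Gr" using eval_closed_mon[OF hR] C_def by simp
  define A where "A = eval Gr (map h ([s1, s2] @ R))"
  define B where "B = eval Gr (map h ([s2, s1] @ R))"
  have A: "A = g1 \<otimes>\<^bsub>Gr\<^esub> (g2 \<otimes>\<^bsub>Gr\<^esub> C)" unfolding A_def C_def using s by (simp add: eval_def)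
  have B: "B = g2 \<otimes>\<^bsub>Gr\<^esub> (g1 \<otimes>\<^bsub>Gr\<^esub> C)" unfolding B_def C_def using s by (simp add: eval_def)
  have Ac: "A \<in> carrier Gr" "B \<in> carrier Gr" using A B g C by auto
  have l1: "map h ([s1, s2] @ R) \<in> lists (carrier Gr)" "map h ([s2, s1] @ R) \<in> lists (carrier Gr)"
    using hR g s by auto
  have "eval Gr (map h (([s1, s2] @ R) @ ([s2, s1] @ R) @ ([s1, s2] @ R))) = A \<otimes>\<^bsub>Gr\<^esub> (B \<otimes>\<^bsub>Gr\<^esub> A)"
  proof -
    let ?X = "map h ([s1, s2] @ R)" and ?Y = "map h ([s2, s1] @ R)"
    have "map h (([s1, s2] @ R) @ ([s2, s1] @ R) @ ([s1, s2] @ R)) = ?X @ (?Y @ ?X)"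
      by (simp only: map_append)
    moreover have "?Y @ ?X \<in> lists (carrier Gr)" using l1 by (simp only: append_in_lists_conv)
    ultimately show ?thesis unfolding A_def B_def using eval_append_mon l1 by metis
  qed
  then have e1: "A \<otimes>\<^bsub>Gr\<^esub> (B \<otimes>\<^bsub>Gr\<^esub> A) = A" using R(3) A_def by simp
  have "A = \<one>\<^bsub>Gr\<^esub>" using R(4) A_def Ac by simp
  then have "B = \<one>\<^bsub>Gr\<^esub>" using e1 Ac by simp
  then have "g1 \<otimes>\<^bsub>Gr\<^esub> (g2 \<otimes>\<^bsub>Gr\<^esub> C) = g2 \<otimes>\<^bsub>Gr\<^esub> (g1 \<otimes>\<^bsub>Gr\<^esub> C)" using A B \<open>A = \<one>\<^bsub>Gr\<^esub>\<close> by simp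
  then have "(g1 \<otimes>\<^bsub>Gr\<^esub> g2) \<otimes>\<^bsub>Gr\<^esub> C = (g2 \<otimes>\<^bsub>Gr\<^esub> g1) \<otimes>\<^bsub>Gr\<^esub> C" using g C by (simp add: m_assoc)
  then have "g1 \<otimes>\<^bsub>Gr\<^esub> g2 = g2 \<otimes>\<^bsub>Gr\<^esub> g1" using g C by simp
  then show False using g(3) by blast
qed


theorem mainTheorem15:
  fixes L :: "('a::finite) list set"
    and G :: "'a list set set"
    and Gr :: "'g monoid"
  assumes "regular L"
    and "generating_set (synt_monoid L) G"
    and "(\<exists>u\<in>lists G. \<exists>v\<in>lists G. \<exists>w1\<in>lists G. \<exists>w2\<in>lists G.
            u = w1 @ w2 \<and> v \<in> shuffles w1 w2 \<and>
            eval (synt_monoid L) u \<otimes>\<^bsub>synt_monoid L\<^esub> eval (synt_monoid L) u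
              = eval (synt_monoid L) u \<and>
            \<not> synt_order L (eval (synt_monoid L) (u @ v @ u)) (eval (synt_monoid L) u))
       \<or> (group Gr \<and> \<not> comm_group Gr \<and> odivides Gr (=) (synt_monoid L) (synt_order L))
       \<or> (\<exists>q>1. Tq_monoid (synt_monoid L) q)
       \<or> odivides (synt_monoid BA2_lang) (synt_order BA2_lang) (synt_monoid L) (synt_order L)
       \<or> odivides (synt_monoid U_lang) (synt_order U_lang) (synt_monoid L) (synt_order L)"
  shows "L \<notin> PolCom"
proof
  assume L: "L \<in> PolCom"
  let ?M = "synt_monoid L"
  from assms(3) show False
  proof (elim disjE)
    assume "\<exists>u\<in>lists G. \<exists>v\<in>lists G. \<exists>w1\<in>lists G. \<exists>w2\<in>lists G.
            u = w1 @ w2 \<and> v \<in> shuffles w1 w2 \<and>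
            eval ?M u \<otimes>\<^bsub>?M\<^esub> eval ?M u = eval ?M u \<and>
            \<not> synt_order L (eval ?M (u @ v @ u)) (eval ?M u)"
    then obtain u v w1 w2 where uv: "u \<in> lists G" "v \<in> lists G" "u = w1 @ w2" "v \<in> shuffles w1 w2"
       "eval ?M u \<otimes>\<^bsub>?M\<^esub> eval ?M u = eval ?M u"
       "\<not> synt_order L (eval ?M (u @ v @ u)) (eval ?M u)" by blast
    have GM: "G \<subseteq> carrier ?M" using assms(2) unfolding generating_set_def by (rule conjunct1)
    have u: "u \<in> lists (carrier ?M)" using uv(1) GM by auto
    have v: "v \<in> lists (carrier ?M)" using uv(2) GM by auto
    have m: "mset v = mset u" using mset_shuffles[OF uv(4)] uv(3) by simp
    show False using keyAM[OF L u v m uv(5)] uv(6) by simp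
  next
    assume "group Gr \<and> \<not> comm_group Gr \<and> odivides Gr (=) (synt_monoid L) (synt_order L)"
    then show False using group_case[OF L assms(1)] by blast
  next
    assume "\<exists>q>1. Tq_monoid (synt_monoid L) q"
    then show False using Tq_case[OF L] by blast
  next
    assume "odivides (synt_monoid BA2_lang) (synt_order BA2_lang) (synt_monoid L) (synt_order L)"
    then show False using BA2_case[OF L assms(1)] by blast
  next
    assume "odivides (synt_monoid U_lang) (synt_order U_lang) (synt_monoid L) (synt_order L)"
    then show False using U_case[OF L assms(1)] by blast
  qed
qed

end
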